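(* Let $X=[\alpha,\beta]$ be a compact interval, $w$ a positive continuous function on $X$, and $\langle f,g\rangle_w=\int_Xf(x)\overline{g(x)}w(x)\,dx$. Let $B_1,\dots,B_n\in C(X)$ be linearly independent, $U_n$ their span, and $S=(s_{i,j})$ with $s_{i,j}=\langle B_i,B_j\rangle_w$. Assume $S$ is tridiagonal ($s_{i,j}=0$ if $|i-j|\ge2$) and row diagonally dominant with factor $c\in(0,1)$, i.e. $|s_{j-1,j}|+|s_{j,j+1}|\le c\,|s_{j,j}|$ for $j=1,\dots,n$, with the convention $s_{0,1}=s_{n,n+1}=0$. Then $$\|P^{U_n}\|_{op}\le\frac{\max_{x\in X}\sum_{j=1}^n|B_j(x)|}{1-c}\max_{1\le j\le n}\frac{\int_X|B_j(y)|w(y)\,dy}{\int_X|B_j(y)|^2w(y)\,dy}.$$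
   Context: $P^{U_n}:C(X)\to C(X)$ maps $f$ to its best approximation from $U_n$ in the norm $\|f\|_w=\sqrt{\langle f,f\rangle_w}$ (the $\langle\cdot,\cdot\rangle_w$-orthogonal projection onto $U_n$), and $\|P^{U_n}\|_{op}=\sup_{f\ne0}\|P^{U_n}f\|_X/\|f\|_X$ with $\|f\|_X=\max_{x\in X}|f(x)|$. *)

theory Defs
  imports "HOL-Analysis.Analysis"
begin

text \<open>Functions on the interval X = [a..b] are complex valued functions on the reals;
  only their values on X matter.\<close>

definition winner :: "real \<Rightarrow> real \<Rightarrow> (real \<Rightarrow> real) \<Rightarrow> (real \<Rightarrow> complex) \<Rightarrow> (real \<Rightarrow> complex) \<Rightarrow> complex" where
  "winner a b w f g = integral {a..b} (\<lambda>x. f x * cnj (g x) * of_real (w x))"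

definition wnorm :: "real \<Rightarrow> real \<Rightarrow> (real \<Rightarrow> real) \<Rightarrow> (real \<Rightarrow> complex) \<Rightarrow> real" where
  "wnorm a b w f = sqrt (Re (winner a b w f f))"

definition supnorm :: "real \<Rightarrow> real \<Rightarrow> (real \<Rightarrow> complex) \<Rightarrow> real" where
  "supnorm a b f = (SUP x\<in>{a..b}. cmod (f x))"

definition spanB :: "nat \<Rightarrow> (nat \<Rightarrow> real \<Rightarrow> complex) \<Rightarrow> (real \<Rightarrow> complex) set" where
  "spanB n B = {(\<lambda>x. \<Sum>j=1..n. c j * B j x) | c. True}"

definition lin_indep_on :: "real \<Rightarrow> real \<Rightarrow> nat \<Rightarrow> (nat \<Rightarrow> real \<Rightarrow> complex) \<Rightarrow> bool" where
  "lin_indep_on a b n B =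
     (\<forall>c::nat \<Rightarrow> complex. (\<forall>x\<in>{a..b}. (\<Sum>j=1..n. c j * B j x) = 0) \<longrightarrow> (\<forall>j\<in>{1..n}. c j = 0))"

definition projU :: "real \<Rightarrow> real \<Rightarrow> (real \<Rightarrow> real) \<Rightarrow> nat \<Rightarrow> (nat \<Rightarrow> real \<Rightarrow> complex)
                     \<Rightarrow> (real \<Rightarrow> complex) \<Rightarrow> (real \<Rightarrow> complex)" where
  "projU a b w n B f = (THE u. u \<in> spanB n B \<and>
       (\<forall>v\<in>spanB n B. wnorm a b w (\<lambda>x. f x - u x) \<le> wnorm a b w (\<lambda>x. f x - v x)))"

definition projU_opnorm :: "real \<Rightarrow> real \<Rightarrow> (real \<Rightarrow> real) \<Rightarrow> nat \<Rightarrow> (nat \<Rightarrow> real \<Rightarrow> complex) \<Rightarrow> real" where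
  "projU_opnorm a b w n B =
     Sup {supnorm a b (projU a b w n B f) / supnorm a b f | f.
            continuous_on {a..b} f \<and> (\<exists>x\<in>{a..b}. f x \<noteq> 0)}"

end

theory Submission
  imports Defs "Jordan_Normal_Form.Determinant"
begin

lemma sum_shift1: "(\<Sum>k=1..n. f k) = (\<Sum>k<n. f (Suc k))"
  by (induct n) auto

lemma solve_system:
  fixes G :: "nat \<Rightarrow> nat \<Rightarrow> complex" and r :: "nat \<Rightarrow> complex" and n :: nat
  assumes inj: "\<And>v. (\<forall>i\<in>{1..n}. (\<Sum>k=1..n. G i k * v k) = 0) \<Longrightarrow> (\<forall>k\<in>{1..n}. v k = 0)"
  shows "\<exists>x. \<forall>i\<in>{1..n}. (\<Sum>k=1..n. G i k * x k) = r i"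
proof -
  define A where "A = Matrix.mat n n (\<lambda>(i,k). G (Suc i) (Suc k))"
  have A: "A \<in> carrier_mat n n" unfolding A_def by auto
  have mv: "(A *\<^sub>v v) $ i = (\<Sum>k=1..n. G (Suc i) k * v $ (k - 1))" if "i < n" "v \<in> carrier_vec n" for i v
    using that unfolding A_def sum_shift1
    by (auto simp: scalar_prod_def intro!: sum.cong)
  have "Determinant.det A \<noteq> 0"
  proof
    assume "Determinant.det A = 0"
    then obtain v where v: "v \<in> carrier_vec n" "v \<noteq> 0\<^sub>v n" "A *\<^sub>v v = 0\<^sub>v n"
      using det_0_iff_vec_prod_zero_field[OF A] by auto
    define v' where "v' k = v $ (k - 1)" for k
    have "\<forall>i\<in>{1..n}. (\<Sum>k=1..n. G i k * v' k) = 0"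
    proof
      fix i assume i: "i \<in> {1..n}"
      then have "(A *\<^sub>v v) $ (i - 1) = 0" using v by auto
      then show "(\<Sum>k=1..n. G i k * v' k) = 0" using mv[of "i - 1" v] i v(1)
        unfolding v'_def by auto
    qed
    from inj[OF this] have "\<forall>k<n. v $ k = 0" unfolding v'_def
      by (metis Suc_leI atLeastAtMost_iff diff_Suc_1 le_add1 plus_1_eq_Suc zero_less_Suc order_less_imp_le Suc_le_mono)
    then have "v = 0\<^sub>v n" using v(1) by (intro eq_vecI) auto
    then show False using v(2) by simp
  qed
  from det_non_zero_imp_unit[OF A this, unfolded Units_def, of "()"]
  obtain M where M: "M \<in> carrier_mat n n" and AM: "A * M = 1\<^sub>m n"
    by (auto simp: ring_mat_def)
  define rv where "rv = Matrix.vec n (\<lambda>i. r (Suc i))"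
  define xv where "xv = M *\<^sub>v rv"
  have rv: "rv \<in> carrier_vec n" unfolding rv_def by auto
  have xv: "xv \<in> carrier_vec n" unfolding xv_def using M rv by auto
  have "A *\<^sub>v xv = rv" unfolding xv_def
    using assoc_mult_mat_vec[OF A M rv] AM rv by simp
  show ?thesis
  proof (intro exI ballI)
    fix i assume i: "i \<in> {1..n}"
    have "(A *\<^sub>v xv) $ (i - 1) = r i" using \<open>A *\<^sub>v xv = rv\<close> i unfolding rv_def by auto
    then show "(\<Sum>k=1..n. G i k * xv $ (k - 1)) = r i" using mv[OF _ xv, of "i - 1"] i by auto
  qed
qed
context fixes a b :: real and w :: "real \<Rightarrow> real" begin
lemma ip_integrable:
  fixes f g :: "real \<Rightarrow> complex"
  assumes "continuous_on {a..b} f" "continuous_on {a..b} g" "continuous_on {a..b} w"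
  shows "(\<lambda>x. f x * cnj (g x) * of_real (w x)) integrable_on {a..b}"
  by (rule integrable_continuous_real, intro continuous_intros) (use assms in auto)

lemma ip_cnj: "winner a b w g f = cnj (winner a b w f g)"
  unfolding winner_def integral_cnj by (simp add: mult.commute)

lemma ip_add_left:
  assumes "continuous_on {a..b} f" "continuous_on {a..b} g" "continuous_on {a..b} h" "continuous_on {a..b} w"
  shows "winner a b w (\<lambda>x. f x + g x) h = winner a b w f h + winner a b w g h"
proof -
  have "winner a b w (\<lambda>x. f x + g x) h = integral {a..b} (\<lambda>x. f x * cnj (h x) * of_real (w x) + g x * cnj (h x) * of_real (w x))"
    unfolding winner_def by (simp add: distrib_right)
  also have "\<dots> = winner a b w f h + winner a b w g h"
    unfolding winner_def using ip_integrable[OF assms(1,3,4)] ip_integrable[OF assms(2,3,4)]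
    by (rule integral_add)
  finally show ?thesis .
qed

lemma ip_add_right:
  assumes "continuous_on {a..b} f" "continuous_on {a..b} g" "continuous_on {a..b} h" "continuous_on {a..b} w"
  shows "winner a b w h (\<lambda>x. f x + g x) = winner a b w h f + winner a b w h g"
  using ip_add_left[OF assms] ip_cnj[of h "\<lambda>x. f x + g x"] ip_cnj[of h f] ip_cnj[of h g] by simp

lemma ip_sum_left:
  assumes "finite J" "\<forall>j\<in>J. continuous_on {a..b} (F j)" "continuous_on {a..b} g" "continuous_on {a..b} w"
  shows "winner a b w (\<lambda>x. \<Sum>j\<in>J. c j * F j x) g = (\<Sum>j\<in>J. c j * winner a b w (F j) g)"
proof -
  have "winner a b w (\<lambda>x. \<Sum>j\<in>J. c j * F j x) g
      = integral {a..b} (\<lambda>x. \<Sum>j\<in>J. c j * (F j x * cnj (g x) * of_real (w x)))"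
    unfolding winner_def by (simp add: sum_distrib_right mult.assoc)
  also have "\<dots> = (\<Sum>j\<in>J. integral {a..b} (\<lambda>x. c j * (F j x * cnj (g x) * of_real (w x))))"
  proof (rule integral_sum)
    fix j assume "j \<in> J"
    then have "(\<lambda>x. F j x * cnj (g x) * of_real (w x)) integrable_on {a..b}"
      using assms by (intro ip_integrable) auto
    then show "(\<lambda>x. c j * (F j x * cnj (g x) * of_real (w x))) integrable_on {a..b}"
      by (rule integrable_on_mult_right)
  qed (use assms in auto)
  also have "\<dots> = (\<Sum>j\<in>J. c j * winner a b w (F j) g)"
    unfolding winner_def by simp
  finally show ?thesis .
qed

lemma ip_sum_right:
  assumes "finite J" "\<forall>j\<in>J. continuous_on {a..b} (F j)" "continuous_on {a..b} g" "continuous_on {a..b} w"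
  shows "winner a b w g (\<lambda>x. \<Sum>j\<in>J. c j * F j x) = (\<Sum>j\<in>J. cnj (c j) * winner a b w g (F j))"
proof -
  have "winner a b w g (\<lambda>x. \<Sum>j\<in>J. c j * F j x) = cnj (\<Sum>j\<in>J. c j * winner a b w (F j) g)"
    using ip_sum_left[OF assms, of c] ip_cnj[of g "\<lambda>x. \<Sum>j\<in>J. c j * F j x"] by simp
  also have "\<dots> = (\<Sum>j\<in>J. cnj (c j) * winner a b w g (F j))"
    unfolding cnj_sum complex_cnj_mult by (intro sum.cong refl) (simp add: ip_cnj[of g "F _"])
  finally show ?thesis .
qed

lemma ip_self:
  fixes h :: "real \<Rightarrow> complex"
  assumes "continuous_on {a..b} h" "continuous_on {a..b} w"
  shows "winner a b w h h = of_real (integral {a..b} (\<lambda>x. (cmod (h x))\<^sup>2 * w x))"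
proof -
  have int: "(\<lambda>x. (cmod (h x))\<^sup>2 * w x) integrable_on {a..b}"
    by (rule integrable_continuous_real, intro continuous_intros) (use assms in auto)
  have hi: "((\<lambda>x. complex_of_real ((cmod (h x))\<^sup>2 * w x)) has_integral
     of_real (integral {a..b} (\<lambda>x. (cmod (h x))\<^sup>2 * w x))) {a..b}"
    by (rule has_integral_of_real[OF integrable_integral[OF int]])
  have eq: "(\<lambda>x. h x * cnj (h x) * of_real (w x)) = (\<lambda>x. complex_of_real ((cmod (h x))\<^sup>2 * w x))"
    by (rule ext) (simp only: of_real_mult complex_norm_square)
  show ?thesis unfolding winner_def eq by (rule integral_unique[OF hi])
qed

lemma ip_self_zero:
  fixes h :: "real \<Rightarrow> complex"
  assumes "a < b" "continuous_on {a..b} h" "continuous_on {a..b} w" "\<forall>x\<in>{a..b}. w x > 0"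
    and "integral {a..b} (\<lambda>x. (cmod (h x))\<^sup>2 * w x) = 0" and x: "x \<in> {a..b}"
  shows "h x = 0"
proof -
  have int: "(\<lambda>x. (cmod (h x))\<^sup>2 * w x) integrable_on {a..b}"
    by (rule integrable_continuous_real, intro continuous_intros) (use assms in auto)
  have hi: "((\<lambda>x. (cmod (h x))\<^sup>2 * w x) has_integral 0) (cbox a b)"
    using integrable_integral[OF int] assms(5) by simp
  have co: "continuous_on (cbox a b) (\<lambda>x. (cmod (h x))\<^sup>2 * w x)"
    unfolding cbox_interval by (intro continuous_intros) (use assms in auto)
  have "(cmod (h x))\<^sup>2 * w x = 0"
  proof (rule has_integral_0_cbox_imp_0[OF co _ hi])
    show "box a b \<noteq> {}" using assms(1) by simp
    show "x \<in> cbox a b" using x by simp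
    fix y assume "y \<in> box a b"
    then have "w y > 0" using assms(4) by (auto simp: box_real)
    then show "0 \<le> (cmod (h y))\<^sup>2 * w y" by simp
  qed
  moreover have "w x > 0" using assms(4) x by blast
  ultimately show ?thesis by simp
qed

lemma ip_self_nonneg:
  fixes h :: "real \<Rightarrow> complex"
  assumes "continuous_on {a..b} h" "continuous_on {a..b} w" "\<forall>x\<in>{a..b}. w x > 0"
  shows "0 \<le> integral {a..b} (\<lambda>x. (cmod (h x))\<^sup>2 * w x)"
  by (rule integral_nonneg, rule integrable_continuous_real, intro continuous_intros) (use assms in \<open>auto simp: less_imp_le\<close>)

lemma ip_diff_left:
  assumes "continuous_on {a..b} f" "continuous_on {a..b} g" "continuous_on {a..b} h" "continuous_on {a..b} w"
  shows "winner a b w (\<lambda>x. f x - g x) h = winner a b w f h - winner a b w g h"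
proof -
  have "winner a b w (\<lambda>x. f x - g x) h = integral {a..b} (\<lambda>x. f x * cnj (h x) * of_real (w x) - g x * cnj (h x) * of_real (w x))"
    unfolding winner_def by (simp add: left_diff_distrib)
  also have "\<dots> = winner a b w f h - winner a b w g h"
    unfolding winner_def using ip_integrable[OF assms(1,3,4)] ip_integrable[OF assms(2,3,4)]
    by (rule integral_diff)
  finally show ?thesis .
qed

end
lemma dd_bound:
  fixes G :: "nat \<Rightarrow> nat \<Rightarrow> complex" and v :: "nat \<Rightarrow> complex" and c :: real
  assumes n: "n \<ge> 1"
    and tri: "\<forall>i\<in>{1..n}. \<forall>k\<in>{1..n}. 2 \<le> \<bar>int i - int k\<bar> \<longrightarrow> G i k = 0"
    and dd: "\<forall>j\<in>{1..n}. (if j = 1 then 0 else cmod (G j (j-1))) + (if j = n then 0 else cmod (G j (j+1))) \<le> c * cmod (G j j)"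
  shows "\<exists>j\<in>{1..n}. (\<forall>k\<in>{1..n}. cmod (v k) \<le> cmod (v j)) \<and>
            (1 - c) * cmod (G j j) * cmod (v j) \<le> cmod (\<Sum>k=1..n. G j k * v k)"
proof -
  define m where "m = Max ((\<lambda>k. cmod (v k)) ` {1..n})"
  have "m \<in> (\<lambda>k. cmod (v k)) ` {1..n}" unfolding m_def using n by (intro Max_in) auto
  then obtain j where j: "j \<in> {1..n}" "cmod (v j) = m" by auto
  have jmax: "\<forall>k\<in>{1..n}. cmod (v k) \<le> cmod (v j)" unfolding j(2) m_def by auto
  define A where "A = {1..n} - {j}"
  have fA: "finite A" unfolding A_def by auto
  have split: "(\<Sum>k=1..n. G j k * v k) = G j j * v j + (\<Sum>k\<in>A. G j k * v k)"
    unfolding A_def using sum.remove[of "{1..n}" j "\<lambda>k. G j k * v k"] j(1) by simp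
  have pw: "cmod (G j k) = (if k = j - 1 then cmod (G j (j-1)) else 0) + (if k = j + 1 then cmod (G j (j+1)) else 0)"
    if k: "k \<in> A" for k
  proof -
    have "k \<in> {1..n}" "k \<noteq> j" using k unfolding A_def by auto
    moreover have "j - 1 \<noteq> j + 1" using j(1) by auto
    moreover have "k \<noteq> j - 1 \<Longrightarrow> k \<noteq> j + 1 \<Longrightarrow> k \<noteq> j \<Longrightarrow> 2 \<le> \<bar>int j - int k\<bar>" using j(1) by auto
    ultimately show ?thesis using tri j(1) by auto
  qed
  have "(\<Sum>k\<in>A. cmod (G j k)) = (\<Sum>k\<in>A. (if k = j - 1 then cmod (G j (j-1)) else 0)) + (\<Sum>k\<in>A. (if k = j + 1 then cmod (G j (j+1)) else 0))"
    by (simp add: pw sum.distrib cong: sum.cong)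
  also have "\<dots> = (if j = 1 then 0 else cmod (G j (j-1))) + (if j = n then 0 else cmod (G j (j+1)))"
  proof -
    have "(j - 1 \<in> A) = (j \<noteq> 1)" "(j + 1 \<in> A) = (j \<noteq> n)" using j(1) unfolding A_def by auto
    then show ?thesis using fA by (simp add: sum.delta')
  qed
  also have "\<dots> \<le> c * cmod (G j j)" using dd j(1) by blast
  finally have offs: "(\<Sum>k\<in>A. cmod (G j k)) \<le> c * cmod (G j j)" .
  have "cmod (\<Sum>k\<in>A. G j k * v k) \<le> (\<Sum>k\<in>A. cmod (G j k) * cmod (v j))"
  proof -
    have "cmod (\<Sum>k\<in>A. G j k * v k) \<le> (\<Sum>k\<in>A. cmod (G j k * v k))" by (rule norm_sum)
    also have "\<dots> \<le> (\<Sum>k\<in>A. cmod (G j k) * cmod (v j))"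
      using jmax unfolding A_def by (intro sum_mono) (auto simp: norm_mult intro!: mult_left_mono)
    finally show ?thesis .
  qed
  also have "\<dots> = (\<Sum>k\<in>A. cmod (G j k)) * cmod (v j)" by (simp add: sum_distrib_right)
  also have "\<dots> \<le> c * cmod (G j j) * cmod (v j)" using offs by (intro mult_right_mono) auto
  finally have rest: "cmod (\<Sum>k\<in>A. G j k * v k) \<le> c * cmod (G j j) * cmod (v j)" .
  have "cmod (G j j) * cmod (v j) - cmod (\<Sum>k\<in>A. G j k * v k) \<le> cmod (\<Sum>k=1..n. G j k * v k)"
    unfolding split using norm_diff_ineq[of "G j j * v j" "\<Sum>k\<in>A. G j k * v k"]
    by (simp add: norm_mult)
  with rest have "(1 - c) * cmod (G j j) * cmod (v j) \<le> cmod (\<Sum>k=1..n. G j k * v k)"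
    by (simp add: algebra_simps)
  with j(1) jmax show ?thesis by blast
qed
lemma cont_bdd_above:
  fixes g :: "real \<Rightarrow> real"
  assumes "continuous_on {a..b} g"
  shows "bdd_above (g ` {a..b})"
  using bounded_imp_bdd_above[OF compact_imp_bounded[OF compact_continuous_image[OF assms compact_Icc]]] .

theorem mainTheorem12:
  fixes a b c :: real and w :: "real \<Rightarrow> real" and n :: nat
    and B :: "nat \<Rightarrow> real \<Rightarrow> complex"
  assumes ab: "a < b"
    and w_cont: "continuous_on {a..b} w" and w_pos: "\<forall>x\<in>{a..b}. w x > 0"
    and n_pos: "n \<ge> 1"
    and B_cont: "\<forall>j\<in>{1..n}. continuous_on {a..b} (B j)"
    and B_indep: "lin_indep_on a b n B"
    and tridiag: "\<forall>i\<in>{1..n}. \<forall>j\<in>{1..n}. \<bar>int i - int j\<bar> \<ge> 2 \<longrightarrow> winner a b w (B i) (B j) = 0"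
    and c_range: "0 < c" "c < 1"
    and diagdom: "\<forall>j\<in>{1..n}.
        (if j = 1 then 0 else cmod (winner a b w (B (j - 1)) (B j)))
      + (if j = n then 0 else cmod (winner a b w (B j) (B (j + 1))))
      \<le> c * cmod (winner a b w (B j) (B j))"
  shows "projU_opnorm a b w n B \<le>
     (SUP x\<in>{a..b}. \<Sum>j=1..n. cmod (B j x)) / (1 - c) *
     Max ((\<lambda>j. integral {a..b} (\<lambda>y. cmod (B j y) * w y) /
               integral {a..b} (\<lambda>y. (cmod (B j y))\<^sup>2 * w y)) ` {1..n})"
proof -
  define G where "G i k = winner a b w (B k) (B i)" for i k
  define I1 where "I1 j = integral {a..b} (\<lambda>y. cmod (B j y) * w y)" for j
  define I2 where "I2 j = integral {a..b} (\<lambda>y. (cmod (B j y))\<^sup>2 * w y)" for j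
  define S where "S = (SUP x\<in>{a..b}. \<Sum>j=1..n. cmod (B j x))"
  define M where "M = Max ((\<lambda>j. I1 j / I2 j) ` {1..n})"
  have RHS: "(SUP x\<in>{a..b}. \<Sum>j=1..n. cmod (B j x)) / (1 - c) *
     Max ((\<lambda>j. integral {a..b} (\<lambda>y. cmod (B j y) * w y) /
               integral {a..b} (\<lambda>y. (cmod (B j y))\<^sup>2 * w y)) ` {1..n}) = S / (1 - c) * M"
    unfolding S_def M_def I1_def I2_def ..
  have Bc: "continuous_on {a..b} (B j)" if "j \<in> {1..n}" for j using B_cont that by blast
  have tri': "\<forall>i\<in>{1..n}. \<forall>k\<in>{1..n}. 2 \<le> \<bar>int i - int k\<bar> \<longrightarrow> G i k = 0"
    unfolding G_def using tridiag by (metis abs_minus_commute)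
  have dd': "\<forall>j\<in>{1..n}. (if j = 1 then 0 else cmod (G j (j-1))) + (if j = n then 0 else cmod (G j (j+1))) \<le> c * cmod (G j j)"
  proof -
    have sw: "cmod (winner a b w (B (j+1)) (B j)) = cmod (winner a b w (B j) (B (j+1)))" for j
      using ip_cnj[of a b w "B j" "B (j+1)"] by simp
    show ?thesis unfolding G_def sw using diagdom .
  qed
  have Gjj: "G j j = of_real (I2 j)" if "j \<in> {1..n}" for j
    unfolding G_def I2_def using ip_self[OF Bc[OF that] w_cont] .
  have I2nn: "0 \<le> I2 j" if "j \<in> {1..n}" for j
    unfolding I2_def using ip_self_nonneg[OF Bc[OF that] w_cont w_pos] .
  have I2pos: "0 < I2 j" if j: "j \<in> {1..n}" for j
  proof (rule ccontr)
    assume "\<not> 0 < I2 j"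
    then have "I2 j = 0" using I2nn[OF j] by auto
    then have z: "B j x = 0" if "x \<in> {a..b}" for x
      using ip_self_zero[OF ab Bc[OF j] w_cont w_pos _ that] unfolding I2_def by blast
    have "\<forall>x\<in>{a..b}. (\<Sum>k=1..n. (if k = j then 1 else 0) * B k x) = 0"
    proof
      fix x assume xab: "x \<in> {a..b}"
      have "(\<Sum>k=1..n. (if k = j then 1 else 0) * B k x) = (\<Sum>k=1..n. if k = j then B k x else 0)"
        by (intro sum.cong) auto
      also have "\<dots> = B j x" using j by simp
      finally show "(\<Sum>k=1..n. (if k = j then 1 else 0) * B k x) = 0" using z[OF xab] by simp
    qed
    with B_indep[unfolded lin_indep_on_def, THEN spec[of _ "\<lambda>k. if k = j then 1 else 0::complex"]]
    have "\<forall>k\<in>{1..n}. (if k = j then 1 else 0 :: complex) = 0" by simp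
    then have "(if j = j then 1 else 0 :: complex) = 0" using j by blast
    then show False by simp
  qed
  have cGjj: "cmod (G j j) = I2 j" if "j \<in> {1..n}" for j
    using Gjj[OF that] I2nn[OF that] by simp
  have inj: "\<forall>k\<in>{1..n}. v k = 0" if hv: "\<forall>i\<in>{1..n}. (\<Sum>k=1..n. G i k * v k) = 0" for v
  proof -
    obtain j where j: "j \<in> {1..n}" "\<forall>k\<in>{1..n}. cmod (v k) \<le> cmod (v j)"
      and le: "(1 - c) * cmod (G j j) * cmod (v j) \<le> cmod (\<Sum>k=1..n. G j k * v k)"
      using dd_bound[OF n_pos tri' dd', of v] by blast
    have "(1 - c) * I2 j * cmod (v j) \<le> 0" using le hv j(1) cGjj[OF j(1)] by simp
    moreover have "(1 - c) * I2 j > 0" using c_range I2pos[OF j(1)] by simp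
    ultimately have "cmod (v j) \<le> 0" by (metis mult_pos_pos not_le)
    then show ?thesis using j(2) by (metis norm_le_zero_iff order_trans)
  qed
  have S_bdd: "bdd_above ((\<lambda>x. \<Sum>j=1..n. cmod (B j x)) ` {a..b})"
    by (rule cont_bdd_above, intro continuous_intros) (use Bc in auto)
  have S_ge: "(\<Sum>j=1..n. cmod (B j y)) \<le> S" if "y \<in> {a..b}" for y
    unfolding S_def using S_bdd that by (rule cSUP_upper2) auto
  have S_nn: "0 \<le> S"
  proof -
    have "0 \<le> (\<Sum>j=1..n. cmod (B j a))" by (rule sum_nonneg) auto
    also have "\<dots> \<le> S" using ab by (intro S_ge) auto
    finally show ?thesis .
  qed
  have M_ge: "I1 j / I2 j \<le> M" if "j \<in> {1..n}" for j
    unfolding M_def using that by (intro Max_ge) auto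
  have key: "supnorm a b (projU a b w n B f) / supnorm a b f \<le> S / (1 - c) * M"
    if fc: "continuous_on {a..b} f" and fnz: "\<exists>x\<in>{a..b}. f x \<noteq> 0" for f
  proof -
    obtain x where x: "\<forall>i\<in>{1..n}. (\<Sum>k=1..n. G i k * x k) = winner a b w f (B i)"
      using solve_system[of n G "\<lambda>i. winner a b w f (B i)"] inj by blast
    define u where "u y = (\<Sum>k=1..n. x k * B k y)" for y
    have uc: "continuous_on {a..b} u" unfolding u_def by (intro continuous_intros) (use Bc in auto)
    define e where "e y = f y - u y" for y
    have ec: "continuous_on {a..b} e" unfolding e_def by (intro continuous_intros fc uc)
    have orth: "winner a b w e (B i) = 0" if i: "i \<in> {1..n}" for i
    proof -
      have "winner a b w u (B i) = (\<Sum>k=1..n. x k * winner a b w (B k) (B i))"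
        unfolding u_def using Bc i by (intro ip_sum_left w_cont) auto
      also have "\<dots> = winner a b w f (B i)" using x i unfolding G_def by (simp add: mult.commute)
      finally show ?thesis unfolding e_def using ip_diff_left[OF fc uc Bc[OF i] w_cont] by simp
    qed
    have orth2: "winner a b w e (\<lambda>y. \<Sum>k=1..n. t k * B k y) = 0" for t
      using ip_sum_right[where a=a and b=b and w=w and J="{1..n}" and F=B and g=e and c=t] Bc ec w_cont orth by simp
    have orth3: "winner a b w (\<lambda>y. \<Sum>k=1..n. t k * B k y) e = 0" for t
      using orth2[of t] ip_cnj[of a b w "\<lambda>y. \<Sum>k=1..n. t k * B k y" e] by simp
    define Ie where "Ie = integral {a..b} (\<lambda>y. (cmod (e y))\<^sup>2 * w y)"
    have pyth: "Re (winner a b w (\<lambda>y. f y - (\<Sum>k=1..n. t k * B k y)) (\<lambda>y. f y - (\<Sum>k=1..n. t k * B k y)))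
        = Ie + integral {a..b} (\<lambda>y. (cmod (\<Sum>k=1..n. (x k - t k) * B k y))\<^sup>2 * w y)" for t
    proof -
      define d where "d y = (\<Sum>k=1..n. (x k - t k) * B k y)" for y
      have dc: "continuous_on {a..b} d" unfolding d_def by (intro continuous_intros) (use Bc in auto)
      have eq: "(\<lambda>y. f y - (\<Sum>k=1..n. t k * B k y)) = (\<lambda>y. e y + d y)"
        unfolding e_def d_def u_def by (auto simp: left_diff_distrib sum_subtractf)
      have "winner a b w (\<lambda>y. e y + d y) (\<lambda>y. e y + d y)
          = winner a b w e e + winner a b w e d + (winner a b w d e + winner a b w d d)"
        using ip_add_left[OF ec dc _ w_cont] ip_add_right[OF ec dc _ w_cont] ec dc
        by (simp add: continuous_on_add)
      also have "winner a b w e d = 0" unfolding d_def by (rule orth2)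
      also have "winner a b w d e = 0" unfolding d_def by (rule orth3)
      finally show ?thesis unfolding eq Ie_def d_def[symmetric]
        using ip_self[OF ec w_cont] ip_self[OF dc w_cont] by simp
    qed
    have Ie_nn: "0 \<le> Ie" unfolding Ie_def by (rule ip_self_nonneg[OF ec w_cont w_pos])
    have proj: "projU a b w n B f = u"
      unfolding projU_def
    proof (rule the_equality)
      show "u \<in> spanB n B \<and> (\<forall>v\<in>spanB n B. wnorm a b w (\<lambda>y. f y - u y) \<le> wnorm a b w (\<lambda>y. f y - v y))"
      proof
        show "u \<in> spanB n B" unfolding spanB_def u_def by blast
        show "\<forall>v\<in>spanB n B. wnorm a b w (\<lambda>y. f y - u y) \<le> wnorm a b w (\<lambda>y. f y - v y)"
        proof
          fix v assume "v \<in> spanB n B"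
          then obtain t where t: "v = (\<lambda>y. \<Sum>k=1..n. t k * B k y)" unfolding spanB_def by blast
          have "(\<lambda>y. f y - u y) = (\<lambda>y. f y - (\<Sum>k=1..n. x k * B k y))" unfolding u_def ..
          then have wu: "wnorm a b w (\<lambda>y. f y - u y) = sqrt (Ie + integral {a..b} (\<lambda>y. (cmod (\<Sum>k=1..n. (x k - x k) * B k y))\<^sup>2 * w y))"
            unfolding wnorm_def using pyth[of x] by simp
          have wv: "wnorm a b w (\<lambda>y. f y - v y) = sqrt (Ie + integral {a..b} (\<lambda>y. (cmod (\<Sum>k=1..n. (x k - t k) * B k y))\<^sup>2 * w y))"
            unfolding wnorm_def t using pyth[of t] by simp
          have "0 \<le> integral {a..b} (\<lambda>y. (cmod (\<Sum>k=1..n. (x k - t k) * B k y))\<^sup>2 * w y)"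
            by (rule ip_self_nonneg[OF _ w_cont w_pos], intro continuous_intros) (use Bc in auto)
          then show "wnorm a b w (\<lambda>y. f y - u y) \<le> wnorm a b w (\<lambda>y. f y - v y)"
            unfolding wu wv by simp
        qed
      qed
    next
      fix u' assume H: "u' \<in> spanB n B \<and> (\<forall>v\<in>spanB n B. wnorm a b w (\<lambda>y. f y - u' y) \<le> wnorm a b w (\<lambda>y. f y - v y))"
      then obtain t where t: "u' = (\<lambda>y. \<Sum>k=1..n. t k * B k y)" unfolding spanB_def by blast
      have "u \<in> spanB n B" unfolding spanB_def u_def by blast
      with H have le: "wnorm a b w (\<lambda>y. f y - u' y) \<le> wnorm a b w (\<lambda>y. f y - u y)" by blast
      define Id where "Id = integral {a..b} (\<lambda>y. (cmod (\<Sum>k=1..n. (x k - t k) * B k y))\<^sup>2 * w y)"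
      have Id_nn: "0 \<le> Id" unfolding Id_def
        by (rule ip_self_nonneg[OF _ w_cont w_pos], intro continuous_intros) (use Bc in auto)
      have "(\<lambda>y. f y - u y) = (\<lambda>y. f y - (\<Sum>k=1..n. x k * B k y))" unfolding u_def ..
      then have wu: "wnorm a b w (\<lambda>y. f y - u y) = sqrt Ie"
        unfolding wnorm_def using pyth[of x] by simp
      have wv: "wnorm a b w (\<lambda>y. f y - u' y) = sqrt (Ie + Id)"
        unfolding wnorm_def t Id_def using pyth[of t] by simp
      from le have "Ie + Id \<le> Ie" unfolding wu wv by simp
      with Id_nn have "Id = 0" by simp
      have dcont: "continuous_on {a..b} (\<lambda>y. \<Sum>k=1..n. (x k - t k) * B k y)"
        by (intro continuous_intros) (use Bc in auto)
      have z: "(\<Sum>k=1..n. (x k - t k) * B k y) = 0" if "y \<in> {a..b}" for y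
        by (rule ip_self_zero[OF ab dcont w_cont w_pos _ that]) (use \<open>Id = 0\<close> in \<open>simp add: Id_def\<close>)
      have "\<forall>k\<in>{1..n}. x k - t k = 0"
        by (rule B_indep[unfolded lin_indep_on_def, THEN spec[of _ "\<lambda>k. x k - t k"], THEN mp]) (use z in blast)
      then show "u' = u" unfolding t u_def by (intro ext sum.cong) auto
    qed
    define F where "F = supnorm a b f"
    have f_bdd: "bdd_above ((\<lambda>y. cmod (f y)) ` {a..b})"
      by (rule cont_bdd_above, intro continuous_intros fc)
    have F_ge: "cmod (f y) \<le> F" if "y \<in> {a..b}" for y
      unfolding F_def supnorm_def using f_bdd that by (rule cSUP_upper2) auto
    obtain x0 where x0: "x0 \<in> {a..b}" "f x0 \<noteq> 0" using fnz by blast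
    have F_pos: "0 < F" using F_ge[OF x0(1)] x0(2) by (meson order_less_le_trans zero_less_norm_iff)
    obtain j where j: "j \<in> {1..n}" "\<forall>k\<in>{1..n}. cmod (x k) \<le> cmod (x j)"
      and le: "(1 - c) * cmod (G j j) * cmod (x j) \<le> cmod (\<Sum>k=1..n. G j k * x k)"
      using dd_bound[OF n_pos tri' dd', of x] by blast
    have rb: "cmod (winner a b w f (B j)) \<le> F * I1 j"
    proof -
      have "norm (integral {a..b} (\<lambda>y. f y * cnj (B j y) * of_real (w y))) \<le> integral {a..b} (\<lambda>y. F * (cmod (B j y) * w y))"
      proof (rule integral_norm_bound_integral)
        show "(\<lambda>y. f y * cnj (B j y) * of_real (w y)) integrable_on {a..b}"
          by (rule ip_integrable[OF fc Bc[OF j(1)] w_cont])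
        show "(\<lambda>y. F * (cmod (B j y) * w y)) integrable_on {a..b}"
          by (rule integrable_continuous_real, intro continuous_intros) (use Bc[OF j(1)] w_cont in auto)
        fix y assume y: "y \<in> {a..b}"
        then have wy: "w y > 0" using w_pos by blast
        have "norm (f y * cnj (B j y) * of_real (w y)) = cmod (f y) * (cmod (B j y) * w y)"
          using wy by (simp add: norm_mult)
        also have "\<dots> \<le> F * (cmod (B j y) * w y)"
          using F_ge[OF y] wy by (intro mult_right_mono) auto
        finally show "norm (f y * cnj (B j y) * of_real (w y)) \<le> F * (cmod (B j y) * w y)" .
      qed
      then show ?thesis unfolding winner_def I1_def by simp
    qed
    have I2j: "0 < I2 j" using I2pos[OF j(1)] .
    have "(1 - c) * I2 j * cmod (x j) \<le> F * I1 j"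
      using le rb x j(1) cGjj[OF j(1)] by simp
    then have "cmod (x j) \<le> F * I1 j / ((1 - c) * I2 j)"
      using I2j c_range by (simp add: pos_le_divide_eq mult.commute mult.left_commute)
    also have "\<dots> = F / (1 - c) * (I1 j / I2 j)" by simp
    also have "\<dots> \<le> F / (1 - c) * M"
      using M_ge[OF j(1)] F_pos c_range by (intro mult_left_mono) auto
    finally have mx: "cmod (x j) \<le> F / (1 - c) * M" .
    have ub: "cmod (u y) \<le> cmod (x j) * S" if y: "y \<in> {a..b}" for y
    proof -
      have "cmod (u y) \<le> (\<Sum>k=1..n. cmod (x k * B k y))" unfolding u_def by (rule norm_sum)
      also have "\<dots> \<le> (\<Sum>k=1..n. cmod (x j) * cmod (B k y))"
        using j(2) by (intro sum_mono) (auto simp: norm_mult intro!: mult_right_mono)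
      also have "\<dots> = cmod (x j) * (\<Sum>k=1..n. cmod (B k y))" by (simp add: sum_distrib_left)
      also have "\<dots> \<le> cmod (x j) * S" using S_ge[OF y] by (intro mult_left_mono) auto
      finally show ?thesis .
    qed
    have su: "supnorm a b u \<le> cmod (x j) * S"
      unfolding supnorm_def using ab ub by (intro cSUP_least) auto
    have "supnorm a b (projU a b w n B f) / supnorm a b f = supnorm a b u / F"
      unfolding proj F_def ..
    also have "\<dots> \<le> cmod (x j) * S / F" using su F_pos by (simp add: divide_right_mono)
    also have "\<dots> \<le> (F / (1 - c) * M) * S / F"
      using mx S_nn F_pos by (intro divide_right_mono mult_right_mono) auto
    also have "\<dots> = S / (1 - c) * M" using F_pos by simp
    finally show ?thesis .
  qed
  show ?thesis
    unfolding projU_opnorm_def RHS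
  proof (rule cSup_least)
    have "continuous_on {a..b} (\<lambda>x. 1::complex)" by simp
    moreover have "\<exists>x\<in>{a..b}. (1::complex) \<noteq> 0" using ab by auto
    ultimately show "{supnorm a b (projU a b w n B f) / supnorm a b f |f.
        continuous_on {a..b} f \<and> (\<exists>x\<in>{a..b}. f x \<noteq> 0)} \<noteq> {}" by blast
  next
    fix r assume "r \<in> {supnorm a b (projU a b w n B f) / supnorm a b f |f.
        continuous_on {a..b} f \<and> (\<exists>x\<in>{a..b}. f x \<noteq> 0)}"
    then show "r \<le> S / (1 - c) * M" using key by blast
  qed
qed

end
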